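(* Assume there exist $\psi\in\mathcal B_{b,\gg}(\chi)$, $t_0>0$, $a>0$ and a submarkovian kernel $\tilde P$ with $\psi(x)\Lambda(dx)P_{t_0}(x,dy)=a\psi(y)\Lambda(dy)\tilde P(y,dx)$ as measures on $\chi\times\chi$. Let $\pi$ be a QSD of $(X_t)_{0\le t<\tau_\partial}$ with $\pi\ll\Lambda$, and suppose $(P_t)_{t\ge0}$ has a non-negative $L^1(\pi)$-right eigenfunction $\phi$ (i.e. $P_t\phi=\lambda(\pi)^t\phi$ $\pi$-a.e. for all $t$) with $\pi(\phi)=1$. Suppose further that $$\Big\|\frac{d\mathcal L_\mu(X_t\mid\tau_\partial>t)}{d\pi}-1\Big\|_{L^\infty(\pi)}\to0\ \ (t\to\infty)\quad\text{whenever }\mu\in\mathcal P_\infty(\pi)\text{ and }\mu(\phi)>0.$$ Then $\pi\in\mathcal P_\infty(\Lambda)$, i.e. $\pi$ has an essentially bounded density with respect to $\Lambda$.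
   Context: $\chi$ is a metric space with Borel $\sigma$-algebra and a distinguished $\sigma$-finite Borel measure $\Lambda$ of full support. $(X_t)_{0\le t<\tau_\partial}$ is a killed Markov process on $\chi$ with absorption time $\tau_\partial$ and submarkovian semigroup $P_t(x,A)=\mathbb P_x(X_t\in A,\tau_\partial>t)$, acting on $L^1(\pi)$ by $P_tf(x)=\mathbb E_x[f(X_t)\mathbb 1(\tau_\partial>t)]$. A QSD is $\pi\in\mathcal P(\chi)$ with $\mathbb P_\pi(X_t\in\cdot\mid\tau_\partial>t)=\pi$ for all $t$; $\lambda(\pi)=\mathbb P_\pi(\tau_\partial>1)$. $\mathcal P_\infty(m)$ = probability measures $\ll m$ with density in $L^\infty(m)$. $\mathcal B_{b,\gg}(\chi)$ = bounded Borel functions with positive infimum. *)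

theory Defs
  imports "HOL-Probability.Probability"
begin

definition submarkov_kernel :: "('a::topological_space \<Rightarrow> 'a measure) \<Rightarrow> bool" where
  "submarkov_kernel K \<longleftrightarrow> K \<in> borel \<rightarrow>\<^sub>M subprob_algebra borel"

text \<open>The submarkovian semigroup P t x A = P_x(X_t in A, tau > t) of a killed Markov process.\<close>
definition submarkov_semigroup :: "(real \<Rightarrow> 'a::topological_space \<Rightarrow> 'a measure) \<Rightarrow> bool" where
  "submarkov_semigroup P \<longleftrightarrow>
     (\<forall>t\<ge>0. submarkov_kernel (P t)) \<and>
     (\<forall>x. P 0 x = return borel x) \<and>
     (\<forall>s t x. s \<ge> 0 \<longrightarrow> t \<ge> 0 \<longrightarrow> P (s + t) x = bind (P s x) (P t))"

definition cond_law :: "(real \<Rightarrow> 'a::topological_space \<Rightarrow> 'a measure) \<Rightarrow> 'a measure \<Rightarrow> real \<Rightarrow> 'a measure" where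
  "cond_law P \<mu> t = scale_measure (1 / emeasure (bind \<mu> (P t)) UNIV) (bind \<mu> (P t))"

definition is_QSD :: "(real \<Rightarrow> 'a::topological_space \<Rightarrow> 'a measure) \<Rightarrow> 'a measure \<Rightarrow> bool" where
  "is_QSD P \<pi> \<longleftrightarrow> prob_space \<pi> \<and> sets \<pi> = sets borel \<and>
     (\<forall>t\<ge>0. emeasure (bind \<pi> (P t)) UNIV > 0 \<and> cond_law P \<pi> t = \<pi>)"

definition lambda_QSD :: "(real \<Rightarrow> 'a::topological_space \<Rightarrow> 'a measure) \<Rightarrow> 'a measure \<Rightarrow> real" where
  "lambda_QSD P \<pi> = measure (bind \<pi> (P 1)) UNIV"

definition P_inf :: "'a measure \<Rightarrow> 'a measure set" where
  "P_inf m = {\<mu>. prob_space \<mu> \<and> sets \<mu> = sets m \<and>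
      (\<exists>f\<in>borel_measurable m. \<mu> = density m (\<lambda>x. ennreal (f x)) \<and> (\<exists>C. AE x in m. f x \<le> C))}"

definition Bb_pos :: "('a::topological_space \<Rightarrow> real) set" where
  "Bb_pos = {\<psi>. \<psi> \<in> borel_measurable borel \<and> (\<exists>C. \<forall>x. \<bar>\<psi> x\<bar> \<le> C) \<and> (\<exists>c>0. \<forall>x. c \<le> \<psi> x)}"

end

theory Submission
  imports Defs
begin

lemma step_bound:
  fixes \<Lambda> :: "'a::topological_space measure" and Q Ptil :: "'a \<Rightarrow> 'a measure" and \<psi> :: "'a \<Rightarrow> real"
  assumes sL: "sets \<Lambda> = sets borel"
    and QK: "Q \<in> borel \<rightarrow>\<^sub>M subprob_algebra borel"
    and PtK: "Ptil \<in> borel \<rightarrow>\<^sub>M subprob_algebra borel"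
    and psim: "\<psi> \<in> borel_measurable borel"
    and psiC: "\<forall>x. \<psi> x \<le> C" and c: "c > 0" and psic: "\<forall>x. c \<le> \<psi> x"
    and a: "a > 0"
    and dual: "\<forall>D \<in> sets (borel \<Otimes>\<^sub>M borel).
          (\<integral>\<^sup>+ x. ennreal (\<psi> x) * (\<integral>\<^sup>+ y. indicator D (x, y) \<partial>Q x) \<partial>\<Lambda>)
        = ennreal a * (\<integral>\<^sup>+ y. ennreal (\<psi> y) * (\<integral>\<^sup>+ x. indicator D (x, y) \<partial>Ptil y) \<partial>\<Lambda>)"
    and sN: "sets \<nu> = sets borel" and K: "K \<ge> 0"
    and le: "\<forall>A\<in>sets borel. emeasure \<nu> A \<le> ennreal K * emeasure \<Lambda> A"
    and B: "B \<in> sets borel"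
  shows "emeasure (bind \<nu> Q) B \<le> ennreal (K * (a * C / c)) * emeasure \<Lambda> B"
proof -
  have C0: "C > 0" using psiC psic c by (meson less_le_trans)
  have spN: "space \<nu> = UNIV" using sets_eq_imp_space_eq[OF sN] by simp
  have QK': "Q \<in> \<nu> \<rightarrow>\<^sub>M subprob_algebra borel" using QK measurable_cong_sets[OF sN refl] by blast
  have QL: "Q \<in> \<Lambda> \<rightarrow>\<^sub>M subprob_algebra borel" using QK measurable_cong_sets[OF sL refl] by blast
  have e1: "emeasure (bind \<nu> Q) B = (\<integral>\<^sup>+ x. emeasure (Q x) B \<partial>\<nu>)"
    using emeasure_bind[OF _ QK' B] spN by simp
  have mle: "\<nu> \<le> scale_measure (ennreal K) \<Lambda>"
    using le_measure[of \<nu> "scale_measure (ennreal K) \<Lambda>"] sN sL le by simp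
  have emN: "(\<lambda>x. emeasure (Q x) B) \<in> borel_measurable \<nu>"
    using measurable_emeasure_subprob_algebra[OF B] QK' by measurable
  have emL: "(\<lambda>x. emeasure (Q x) B) \<in> borel_measurable \<Lambda>"
    using measurable_emeasure_subprob_algebra[OF B] QL by measurable
  have e2: "(\<integral>\<^sup>+ x. emeasure (Q x) B \<partial>\<nu>) \<le> ennreal K * (\<integral>\<^sup>+ x. emeasure (Q x) B \<partial>\<Lambda>)"
  proof -
    have "(\<integral>\<^sup>+ x. emeasure (Q x) B \<partial>\<nu>) \<le> (\<integral>\<^sup>+ x. emeasure (Q x) B \<partial>scale_measure (ennreal K) \<Lambda>)"
      by (rule nn_integral_mono_measure) (use sN sL mle in auto)
    also have "\<dots> = ennreal K * (\<integral>\<^sup>+ x. emeasure (Q x) B \<partial>\<Lambda>)"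
      by (rule nn_integral_scale_measure[OF emL])
    finally show ?thesis .
  qed
  have e3: "ennreal c * (\<integral>\<^sup>+ x. emeasure (Q x) B \<partial>\<Lambda>) \<le> (\<integral>\<^sup>+ x. ennreal (\<psi> x) * emeasure (Q x) B \<partial>\<Lambda>)"
  proof -
    have "ennreal c * (\<integral>\<^sup>+ x. emeasure (Q x) B \<partial>\<Lambda>) = (\<integral>\<^sup>+ x. ennreal c * emeasure (Q x) B \<partial>\<Lambda>)"
      by (rule nn_integral_cmult[symmetric, OF emL])
    also have "\<dots> \<le> (\<integral>\<^sup>+ x. ennreal (\<psi> x) * emeasure (Q x) B \<partial>\<Lambda>)"
      by (intro nn_integral_mono mult_right_mono ennreal_leI) (use psic in auto)
    finally show ?thesis .
  qed
  have UB: "UNIV \<times> B \<in> sets (borel \<Otimes>\<^sub>M borel)" using B by (intro pair_measureI) auto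
  have ind: "\<And>x y. indicator (UNIV \<times> B) (x, y) = (indicator B y :: ennreal)"
    by (simp add: indicator_def)
  have sQ: "\<And>x. sets (Q x) = sets borel"
    using measurable_space[OF QK] by (simp add: space_subprob_algebra)
  have sPt: "\<And>y. subprob_space (Ptil y)"
    using measurable_space[OF PtK] by (simp add: space_subprob_algebra)
  have e4: "(\<integral>\<^sup>+ x. ennreal (\<psi> x) * emeasure (Q x) B \<partial>\<Lambda>)
      = ennreal a * (\<integral>\<^sup>+ y. ennreal (\<psi> y) * (\<integral>\<^sup>+ x. indicator B y \<partial>Ptil y) \<partial>\<Lambda>)"
    using dual[rule_format, OF UB] B sQ by (simp add: ind)
  have e5: "(\<integral>\<^sup>+ y. ennreal (\<psi> y) * (\<integral>\<^sup>+ x. indicator B y \<partial>Ptil y) \<partial>\<Lambda>) \<le> ennreal C * emeasure \<Lambda> B"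
  proof -
    have "(\<integral>\<^sup>+ y. ennreal (\<psi> y) * (\<integral>\<^sup>+ x. indicator B y \<partial>Ptil y) \<partial>\<Lambda>) \<le> (\<integral>\<^sup>+ y. ennreal C * indicator B y \<partial>\<Lambda>)"
    proof (intro nn_integral_mono)
      fix y
      have "(\<integral>\<^sup>+ x. indicator B y \<partial>Ptil y) = indicator B y * emeasure (Ptil y) (space (Ptil y))"
        by simp
      also have "\<dots> \<le> indicator B y * 1"
        by (intro mult_left_mono subprob_space.emeasure_space_le_1[OF sPt]) auto
      finally have "(\<integral>\<^sup>+ x. indicator B y \<partial>Ptil y) \<le> indicator B y" by simp
      then show "ennreal (\<psi> y) * (\<integral>\<^sup>+ x. indicator B y \<partial>Ptil y) \<le> ennreal C * indicator B y"
        using psiC by (intro mult_mono ennreal_leI) auto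
    qed
    also have "\<dots> = ennreal C * emeasure \<Lambda> B"
      using B sL by (intro nn_integral_cmult_indicator) auto
    finally show ?thesis .
  qed
  define X where "X = (\<integral>\<^sup>+ x. emeasure (Q x) B \<partial>\<Lambda>)"
  have "X = ennreal (1/c) * (ennreal c * X)"
    using c by (simp add: mult.assoc[symmetric] ennreal_mult''[symmetric])
  also have "\<dots> \<le> ennreal (1/c) * (ennreal a * (ennreal C * emeasure \<Lambda> B))"
  proof (intro mult_left_mono)
    show "ennreal c * X \<le> ennreal a * (ennreal C * emeasure \<Lambda> B)"
    proof -
      have "ennreal c * X \<le> (\<integral>\<^sup>+ x. ennreal (\<psi> x) * emeasure (Q x) B \<partial>\<Lambda>)"
        unfolding X_def by (rule e3)
      also have "\<dots> = ennreal a * (\<integral>\<^sup>+ y. ennreal (\<psi> y) * (\<integral>\<^sup>+ x. indicator B y \<partial>Ptil y) \<partial>\<Lambda>)"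
        by (rule e4)
      also have "\<dots> \<le> ennreal a * (ennreal C * emeasure \<Lambda> B)"
        by (rule mult_left_mono[OF e5]) simp
      finally show ?thesis .
    qed
  qed auto
  finally have Xle: "X \<le> ennreal (1/c) * (ennreal a * (ennreal C * emeasure \<Lambda> B))" .
  then have "emeasure (bind \<nu> Q) B \<le> ennreal K * (ennreal (1/c) * (ennreal a * (ennreal C * emeasure \<Lambda> B)))"
    using e1 order_trans[OF e2 mult_left_mono[OF Xle[unfolded X_def]]] by simp
  also have "\<dots> = ennreal (K * (a * C / c)) * emeasure \<Lambda> B"
  proof -
    have r1: "K * (a * C / c) = K * (1/c) * a * C" by simp
    have r2: "ennreal (K * (1/c) * a * C) = ennreal K * ennreal (1/c) * ennreal a * ennreal C"
    proof -
      have nn: "0 \<le> C" "0 \<le> a" "0 \<le> 1/c" using c C0 a by auto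
      show ?thesis by (simp only: ennreal_mult''[OF nn(1)] ennreal_mult''[OF nn(2)] ennreal_mult''[OF nn(3)])
    qed
    show ?thesis unfolding r1 r2 by (simp only: mult.assoc)
  qed
  finally show ?thesis .
qed

theorem mainTheorem8:
  fixes \<Lambda> :: "'a::metric_space measure"
    and P :: "real \<Rightarrow> 'a \<Rightarrow> 'a measure"
    and Ptil :: "'a \<Rightarrow> 'a measure"
    and \<psi> \<phi> :: "'a \<Rightarrow> real"
    and t0 a :: real
    and \<pi> :: "'a measure"
  assumes "sets \<Lambda> = sets borel"
    and "sigma_finite_measure \<Lambda>"
    and "\<forall>U. open U \<and> U \<noteq> {} \<longrightarrow> emeasure \<Lambda> U > 0"
    and "submarkov_semigroup P"
    and "\<psi> \<in> Bb_pos" and "t0 > 0" and "a > 0"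
    and "submarkov_kernel Ptil"
    and "\<forall>C \<in> sets (borel \<Otimes>\<^sub>M borel).
          (\<integral>\<^sup>+ x. ennreal (\<psi> x) * (\<integral>\<^sup>+ y. indicator C (x, y) \<partial>P t0 x) \<partial>\<Lambda>)
        = ennreal a * (\<integral>\<^sup>+ y. ennreal (\<psi> y) * (\<integral>\<^sup>+ x. indicator C (x, y) \<partial>Ptil y) \<partial>\<Lambda>)"
    and "is_QSD P \<pi>"
    and "absolutely_continuous \<Lambda> \<pi>"
    and "\<phi> \<in> borel_measurable borel" and "\<forall>x. 0 \<le> \<phi> x" and "integrable \<pi> \<phi>"
    and "\<forall>t\<ge>0. AE x in \<pi>. (\<integral>\<^sup>+ y. ennreal (\<phi> y) \<partial>P t x) = ennreal (lambda_QSD P \<pi> powr t * \<phi> x)"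
    and "(\<integral>x. \<phi> x \<partial>\<pi>) = 1"
    and "\<forall>\<mu> \<in> P_inf \<pi>. (\<integral>\<^sup>+ x. ennreal (\<phi> x) \<partial>\<mu>) > 0 \<longrightarrow>
          (\<forall>\<epsilon>>0. \<exists>T. \<forall>t\<ge>T. emeasure (bind \<mu> (P t)) UNIV > 0 \<and>
             (\<exists>g\<in>borel_measurable borel. cond_law P \<mu> t = density \<pi> (\<lambda>x. ennreal (g x)) \<and>
                 (AE x in \<pi>. \<bar>g x - 1\<bar> \<le> \<epsilon>)))"
  shows "\<pi> \<in> P_inf \<Lambda>"
proof -
  note sL = assms(1)
  interpret L: sigma_finite_measure \<Lambda> by (rule assms(2))
  have psim: "\<psi> \<in> borel_measurable borel" and "\<exists>C. \<forall>x. \<bar>\<psi> x\<bar> \<le> C" and "\<exists>c>0. \<forall>x. c \<le> \<psi> x"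
    using assms(5) unfolding Bb_pos_def by auto
  then obtain C c where psiC: "\<forall>x. \<bar>\<psi> x\<bar> \<le> C" and c: "c > 0" and psic: "\<forall>x. c \<le> \<psi> x"
    by blast
  have psiC': "\<forall>x. \<psi> x \<le> C" using psiC by (meson abs_ge_self order_trans)
  have C0: "C > 0" using psiC' psic c by (meson less_le_trans)
  have PK: "\<And>t. t \<ge> 0 \<Longrightarrow> P t \<in> borel \<rightarrow>\<^sub>M subprob_algebra borel"
    using assms(4) unfolding submarkov_semigroup_def submarkov_kernel_def by blast
  have P0: "P 0 = return borel"
    using assms(4) unfolding submarkov_semigroup_def by auto
  have Psg: "\<And>s t x. s \<ge> 0 \<Longrightarrow> t \<ge> 0 \<Longrightarrow> P (s + t) x = bind (P s x) (P t)"
    using assms(4) unfolding submarkov_semigroup_def by blast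
  have PtK: "Ptil \<in> borel \<rightarrow>\<^sub>M subprob_algebra borel"
    using assms(8) unfolding submarkov_kernel_def by blast
  have pis: "prob_space \<pi>" and spi: "sets \<pi> = sets borel"
    using assms(10) unfolding is_QSD_def by auto
  interpret pi: prob_space \<pi> by (rule pis)
  have spaceL: "space \<Lambda> = UNIV" using sets_eq_imp_space_eq[OF sL] by simp
  have spacepi: "space \<pi> = UNIV" using sets_eq_imp_space_eq[OF spi] by simp
  define h where "h = RN_deriv \<Lambda> \<pi>"
  have hpi: "density \<Lambda> h = \<pi>"
    unfolding h_def using L.density_RN_deriv[OF assms(11)] spi sL by simp
  have hm: "h \<in> borel_measurable \<Lambda>" unfolding h_def by simp
  have hmb: "h \<in> borel_measurable borel" using hm measurable_cong_sets[OF sL refl] by blast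
  have hmpi: "h \<in> borel_measurable \<pi>" using hmb measurable_cong_sets[OF spi refl] by blast
  have phim: "\<phi> \<in> borel_measurable \<pi>" using assms(12) measurable_cong_sets[OF spi refl] by blast
  have hfinL: "AE x in \<Lambda>. h x \<noteq> \<infinity>"
    unfolding h_def using L.RN_deriv_finite[OF pi.sigma_finite_measure_axioms assms(11)] spi sL by simp
  have hfin: "AE x in \<pi>. h x \<noteq> \<infinity>"
    using absolutely_continuous_AE[of \<pi> \<Lambda>, OF _ assms(11) hfinL] spi sL by simp
  define S where "S = (\<lambda>n::nat. {x. h x \<le> of_nat n})"
  have Ssets: "\<And>n. S n \<in> sets borel"
  proof -
    fix n
    have "{x \<in> space borel. h x \<le> of_nat n} \<in> sets borel" using hmb by measurable
    then show "S n \<in> sets borel" unfolding S_def by simp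
  qed
  have "\<exists>n. 0 < (\<integral>\<^sup>+ x. ennreal (\<phi> x) * indicator (S n) x \<partial>\<pi>)"
  proof (rule ccontr)
    assume "\<not> ?thesis"
    then have z: "\<And>n. (\<integral>\<^sup>+ x. ennreal (\<phi> x) * indicator (S n) x \<partial>\<pi>) = 0"
      by (simp add: not_less)
    have "\<And>n. AE x in \<pi>. ennreal (\<phi> x) * indicator (S n) x = 0"
    proof -
      fix n
      have "(\<lambda>x. ennreal (\<phi> x) * indicator (S n) x) \<in> borel_measurable \<pi>"
        using phim Ssets[of n] spi by measurable
      then show "AE x in \<pi>. ennreal (\<phi> x) * indicator (S n) x = 0"
        using z[of n] nn_integral_0_iff_AE by blast
    qed
    then have "AE x in \<pi>. \<forall>n. ennreal (\<phi> x) * indicator (S n) x = 0"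
      using AE_all_countable[where P="\<lambda>n x. ennreal (\<phi> x) * indicator (S n) x = 0" and M=\<pi>] by blast
    then have "AE x in \<pi>. \<phi> x = 0"
      using hfin
    proof eventually_elim
      case (elim x)
      then obtain n where "h x < of_nat n" using ennreal_Ex_less_of_nat[of "h x"] by (auto simp: less_top)
      then have "x \<in> S n" unfolding S_def by simp
      with elim have "ennreal (\<phi> x) = 0" by (auto dest: spec[of _ n])
      then show "\<phi> x = 0" using assms(13)[rule_format, of x] by simp
    qed
    then have "(\<integral>x. \<phi> x \<partial>\<pi>) = (\<integral>x. 0 \<partial>\<pi>)"
      by (intro integral_cong_AE) (use phim in auto)
    then show False using assms(16) by simp
  qed
  then obtain n0 where n0: "0 < (\<integral>\<^sup>+ x. ennreal (\<phi> x) * indicator (S n0) x \<partial>\<pi>)" by blast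
  define p where "p = measure \<pi> (S n0)"
  have Spi: "S n0 \<in> sets \<pi>" using Ssets spi by simp
  have pS: "emeasure \<pi> (S n0) = ennreal p" unfolding p_def by (simp add: pi.emeasure_eq_measure)
  have p0: "p > 0"
  proof (rule ccontr)
    assume "\<not> p > 0"
    then have "emeasure \<pi> (S n0) = 0" using pS measure_nonneg[of \<pi> "S n0"] unfolding p_def by simp
    then have "AE x in \<pi>. x \<notin> S n0" using Spi by (intro AE_I'[of "S n0"]) auto
    then have "AE x in \<pi>. ennreal (\<phi> x) * indicator (S n0) x = 0" by eventually_elim simp
    then have "(\<integral>\<^sup>+ x. ennreal (\<phi> x) * indicator (S n0) x \<partial>\<pi>) = 0"
      using nn_integral_cong_AE[of "\<lambda>x. ennreal (\<phi> x) * indicator (S n0) x" "\<lambda>x. 0" \<pi>] by simp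
    then show False using n0 by simp
  qed
  define f where "f = (\<lambda>x. indicator (S n0) x / p :: real)"
  have fm: "f \<in> borel_measurable \<pi>" unfolding f_def using Spi by measurable
  have fe: "\<And>x. ennreal (f x) = ennreal (1/p) * indicator (S n0) x"
    unfolding f_def by (simp add: indicator_def)
  define \<mu> where "\<mu> = density \<pi> (\<lambda>x. ennreal (f x))"
  have smu: "sets \<mu> = sets borel" unfolding \<mu>_def using spi by simp
  have mu_em: "\<And>A. A \<in> sets borel \<Longrightarrow> emeasure \<mu> A = ennreal (1/p) * emeasure \<pi> (S n0 \<inter> A)"
  proof -
    fix A :: "'a set" assume A: "A \<in> sets borel"
    have "emeasure \<mu> A = (\<integral>\<^sup>+ x. ennreal (f x) * indicator A x \<partial>\<pi>)"
      unfolding \<mu>_def using A spi fm by (intro emeasure_density) auto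
    also have "\<dots> = (\<integral>\<^sup>+ x. ennreal (1/p) * indicator (S n0 \<inter> A) x \<partial>\<pi>)"
      by (intro nn_integral_cong) (simp add: fe indicator_def)
    also have "\<dots> = ennreal (1/p) * emeasure \<pi> (S n0 \<inter> A)"
      using A Spi spi by (intro nn_integral_cmult_indicator) auto
    finally show "emeasure \<mu> A = ennreal (1/p) * emeasure \<pi> (S n0 \<inter> A)" .
  qed
  have mu_P: "\<mu> \<in> P_inf \<pi>"
    unfolding P_inf_def
  proof (intro CollectI conjI)
    show "prob_space \<mu>"
    proof (rule prob_spaceI)
      have "emeasure \<mu> (space \<mu>) = emeasure \<mu> UNIV"
        using sets_eq_imp_space_eq[OF smu] by simp
      also have "\<dots> = ennreal (1/p) * ennreal p" using mu_em[of UNIV] pS by simp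
      also have "\<dots> = 1" using p0 by (simp add: ennreal_mult''[symmetric])
      finally show "emeasure \<mu> (space \<mu>) = 1" .
    qed
    show "sets \<mu> = sets \<pi>" using smu spi by simp
    show "\<exists>f\<in>borel_measurable \<pi>. \<mu> = density \<pi> (\<lambda>x. ennreal (f x)) \<and> (\<exists>C. AE x in \<pi>. f x \<le> C)"
      using fm p0 unfolding \<mu>_def by (intro bexI[of _ f] conjI exI[of _ "1/p"]) (auto simp: f_def indicator_def)
  qed
  have mu_pos: "(\<integral>\<^sup>+ x. ennreal (\<phi> x) \<partial>\<mu>) > 0"
  proof -
    have "(\<integral>\<^sup>+ x. ennreal (\<phi> x) \<partial>\<mu>) = (\<integral>\<^sup>+ x. ennreal (f x) * ennreal (\<phi> x) \<partial>\<pi>)"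
      unfolding \<mu>_def using fm phim by (intro nn_integral_density) auto
    also have "\<dots> = (\<integral>\<^sup>+ x. ennreal (1/p) * (ennreal (\<phi> x) * indicator (S n0) x) \<partial>\<pi>)"
      by (intro nn_integral_cong) (simp add: fe mult_ac)
    also have "\<dots> = ennreal (1/p) * (\<integral>\<^sup>+ x. ennreal (\<phi> x) * indicator (S n0) x \<partial>\<pi>)"
      by (intro nn_integral_cmult borel_measurable_times_ennreal borel_measurable_indicator Spi) (use phim in measurable)
    finally show ?thesis using n0 p0 by (simp add: ennreal_zero_less_mult_iff)
  qed
  define K0 where "K0 = real n0 / p"
  have K0: "K0 \<ge> 0" unfolding K0_def using p0 by simp
  have mu_le: "\<forall>A\<in>sets borel. emeasure \<mu> A \<le> ennreal K0 * emeasure \<Lambda> A"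
  proof
    fix A :: "'a set" assume A: "A \<in> sets borel"
    have SA: "S n0 \<inter> A \<in> sets \<Lambda>" using A Ssets sL by auto
    have "emeasure \<pi> (S n0 \<inter> A) = (\<integral>\<^sup>+ x. h x * indicator (S n0 \<inter> A) x \<partial>\<Lambda>)"
      using hpi[symmetric] emeasure_density[OF hm SA] by simp
    also have "\<dots> \<le> (\<integral>\<^sup>+ x. of_nat n0 * indicator A x \<partial>\<Lambda>)"
      by (intro nn_integral_mono) (auto simp: indicator_def S_def)
    also have "\<dots> = of_nat n0 * emeasure \<Lambda> A"
      using A sL by (intro nn_integral_cmult_indicator) auto
    finally have "emeasure \<pi> (S n0 \<inter> A) \<le> of_nat n0 * emeasure \<Lambda> A" .
    then have "emeasure \<mu> A \<le> ennreal (1/p) * (of_nat n0 * emeasure \<Lambda> A)"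
      using mu_em[OF A] by (simp add: mult_left_mono)
    also have "\<dots> = ennreal K0 * emeasure \<Lambda> A"
      unfolding K0_def using p0 by (simp add: ennreal_mult''[symmetric] mult.assoc[symmetric] ennreal_of_nat_eq_real_of_nat)
    finally show "emeasure \<mu> A \<le> ennreal K0 * emeasure \<Lambda> A" .
  qed
  define r where "r = a * C / c"
  have r0: "r \<ge> 0" unfolding r_def using assms(7) C0 c by simp
  have t00: "t0 \<ge> 0" using assms(6) by simp
  have iter: "sets (bind \<mu> (P (real n * t0))) = sets borel \<and>
     (\<forall>B\<in>sets borel. emeasure (bind \<mu> (P (real n * t0))) B \<le> ennreal (K0 * r ^ n) * emeasure \<Lambda> B)" for n
  proof (induction n)
    case 0
    have "bind \<mu> (P (real 0 * t0)) = \<mu>" using P0 smu by (simp add: bind_return'')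
    then show ?case using smu mu_le by simp
  next
    case (Suc n)
    define \<nu> where "\<nu> = bind \<mu> (P (real n * t0))"
    have Pn: "P (real n * t0) \<in> \<mu> \<rightarrow>\<^sub>M subprob_algebra borel"
      using PK[of "real n * t0"] t00 measurable_cong_sets[OF smu refl] by auto
    have eq: "P (real (Suc n) * t0) = (\<lambda>x. bind (P (real n * t0) x) (P t0))"
    proof
      fix x
      have "real (Suc n) * t0 = real n * t0 + t0" by (simp add: algebra_simps)
      then show "P (real (Suc n) * t0) x = bind (P (real n * t0) x) (P t0)"
        using Psg[of "real n * t0" t0 x] t00 by simp
    qed
    have b: "bind \<mu> (P (real (Suc n) * t0)) = bind \<nu> (P t0)"
      unfolding eq \<nu>_def using bind_assoc[OF Pn PK[OF t00]] by simp
    have snu: "sets \<nu> = sets borel" using Suc.IH unfolding \<nu>_def by simp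
    have spnu: "space \<nu> = UNIV" using sets_eq_imp_space_eq[OF snu] by simp
    have sP: "\<And>x. sets (P t0 x) = sets borel"
      using measurable_space[OF PK[OF t00]] by (simp add: space_subprob_algebra)
    have "sets (bind \<nu> (P t0)) = sets borel"
      using sP spnu by (intro sets_bind) auto
    moreover have "\<forall>B\<in>sets borel. emeasure (bind \<nu> (P t0)) B \<le> ennreal (K0 * r ^ Suc n) * emeasure \<Lambda> B"
    proof
      fix B :: "'a set" assume B: "B \<in> sets borel"
      have "emeasure (bind \<nu> (P t0)) B \<le> ennreal ((K0 * r ^ n) * (a * C / c)) * emeasure \<Lambda> B"
        using K0 r0 Suc.IH unfolding \<nu>_def
        by (intro step_bound[OF sL PK[OF t00] PtK psim psiC' c psic assms(7) assms(9)] B) (auto simp: snu[unfolded \<nu>_def])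
      then show "emeasure (bind \<nu> (P t0)) B \<le> ennreal (K0 * r ^ Suc n) * emeasure \<Lambda> B"
        unfolding r_def by (simp add: mult_ac)
    qed
    ultimately show ?case unfolding b by simp
  qed
  obtain T where T: "\<forall>t\<ge>T. emeasure (bind \<mu> (P t)) UNIV > 0 \<and>
             (\<exists>g\<in>borel_measurable borel. cond_law P \<mu> t = density \<pi> (\<lambda>x. ennreal (g x)) \<and>
                 (AE x in \<pi>. \<bar>g x - 1\<bar> \<le> 1/2))"
    using assms(17)[rule_format, OF mu_P mu_pos, of "1/2"] by auto
  define N where "N = nat \<lceil>T / t0\<rceil>"
  have "T / t0 \<le> real N" unfolding N_def by (rule real_nat_ceiling_ge)
  then have TN: "T \<le> real N * t0" using assms(6) by (simp add: divide_le_eq)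
  define t where "t = real N * t0"
  obtain g where mpos: "emeasure (bind \<mu> (P t)) UNIV > 0" and gm: "g \<in> borel_measurable borel"
    and cl: "cond_law P \<mu> t = density \<pi> (\<lambda>x. ennreal (g x))" and gae: "AE x in \<pi>. \<bar>g x - 1\<bar> \<le> 1/2"
    using T TN unfolding t_def by blast
  define m where "m = emeasure (bind \<mu> (P t)) UNIV"
  define Cf where "Cf = 2 * ((1 / m) * ennreal (K0 * r ^ N))"
  have Cf_fin: "Cf \<noteq> \<top>"
  proof -
    have "1 / m \<noteq> \<top>" using mpos unfolding m_def by (simp add: ennreal_divide_eq_top_iff)
    then show ?thesis unfolding Cf_def by (simp add: ennreal_mult_eq_top_iff)
  qed
  have gmpi: "g \<in> borel_measurable \<pi>" using gm measurable_cong_sets[OF spi refl] by blast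
  have piCf: "emeasure \<pi> A \<le> Cf * emeasure \<Lambda> A" if A: "A \<in> sets borel" for A
  proof -
    have "ennreal (1/2) * emeasure \<pi> A = (\<integral>\<^sup>+ x. ennreal (1/2) * indicator A x \<partial>\<pi>)"
      using A spi by (intro nn_integral_cmult_indicator[symmetric]) auto
    also have "\<dots> \<le> (\<integral>\<^sup>+ x. ennreal (g x) * indicator A x \<partial>\<pi>)"
    proof (intro nn_integral_mono_AE)
      show "AE x in \<pi>. ennreal (1/2) * indicator A x \<le> ennreal (g x) * indicator A x"
        using gae
      proof eventually_elim
        case (elim x)
        then have "1/2 \<le> g x" by linarith
        then have "ennreal (1/2) \<le> ennreal (g x)" by (rule ennreal_leI)
        then show ?case by (rule mult_right_mono) simp
      qed
    qed
    also have "\<dots> = emeasure (cond_law P \<mu> t) A"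
      unfolding cl using A spi gmpi by (intro emeasure_density[symmetric]) auto
    also have "\<dots> = (1 / m) * emeasure (bind \<mu> (P t)) A"
      unfolding cond_law_def m_def by simp
    also have "\<dots> \<le> (1 / m) * (ennreal (K0 * r ^ N) * emeasure \<Lambda> A)"
      using iter[of N] A unfolding t_def by (intro mult_left_mono) auto
    finally have "ennreal (1/2) * emeasure \<pi> A \<le> (1 / m) * (ennreal (K0 * r ^ N) * emeasure \<Lambda> A)" .
    then have "2 * (ennreal (1/2) * emeasure \<pi> A) \<le> 2 * ((1 / m) * (ennreal (K0 * r ^ N) * emeasure \<Lambda> A))"
      by (rule mult_left_mono) simp
    moreover have "2 * (ennreal (1/2) * emeasure \<pi> A) = emeasure \<pi> A"
    proof -
      have "(2::ennreal) * ennreal (1/2) = 1" using ennreal_mult''[of "1/2" 2] by simp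
      then show ?thesis by (simp add: mult.assoc[symmetric])
    qed
    ultimately show ?thesis unfolding Cf_def by (simp add: mult_ac)
  qed
  define D where "D = enn2real Cf"
  have D0: "D \<ge> 0" unfolding D_def by simp
  have CfD: "Cf = ennreal D" unfolding D_def using Cf_fin by (simp add: less_top)
  define A0 where "A0 = {x. ennreal (D + 1) < h x}"
  have A0L: "A0 \<in> sets \<Lambda>"
  proof -
    have "{x \<in> space \<Lambda>. ennreal (D + 1) < h x} \<in> sets \<Lambda>" using hm by measurable
    then show ?thesis unfolding A0_def using spaceL by simp
  qed
  have A0b: "A0 \<in> sets borel" using A0L sL by simp
  have lo: "ennreal (D + 1) * emeasure \<Lambda> A0 \<le> emeasure \<pi> A0"
  proof -
    have "ennreal (D + 1) * emeasure \<Lambda> A0 = (\<integral>\<^sup>+ x. ennreal (D + 1) * indicator A0 x \<partial>\<Lambda>)"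
      using A0L by (intro nn_integral_cmult_indicator[symmetric])
    also have "\<dots> \<le> (\<integral>\<^sup>+ x. h x * indicator A0 x \<partial>\<Lambda>)"
      by (intro nn_integral_mono) (auto simp: indicator_def A0_def less_imp_le)
    also have "\<dots> = emeasure \<pi> A0"
      using hpi emeasure_density[OF hm A0L] by simp
    finally show ?thesis .
  qed
  have up: "emeasure \<pi> A0 \<le> ennreal D * emeasure \<Lambda> A0" using piCf[OF A0b] CfD by simp
  have pifin: "emeasure \<pi> A0 < \<top>" using pi.emeasure_finite[of A0] by (simp add: less_top[symmetric])
  have Lfin: "emeasure \<Lambda> A0 \<noteq> \<top>"
  proof
    assume "emeasure \<Lambda> A0 = \<top>"
    then have "ennreal (D + 1) * emeasure \<Lambda> A0 = \<top>" using D0 by (simp add: ennreal_mult_eq_top_iff)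
    then show False using lo pifin by (simp add: top_unique)
  qed
  then obtain L where L: "emeasure \<Lambda> A0 = ennreal L" "L \<ge> 0" by (cases "emeasure \<Lambda> A0") auto
  have "ennreal (D + 1) * ennreal L \<le> ennreal D * ennreal L"
    using order_trans[OF lo up] L by simp
  then have XX: "ennreal ((D + 1) * L) \<le> ennreal (D * L)"
    by (simp only: ennreal_mult''[OF L(2)])
  have DL: "0 \<le> D * L" using D0 L by simp
  have "(D + 1) * L \<le> D * L" using ennreal_le_iff[OF DL, of "(D + 1) * L"] XX by blast
  then have "L = 0" using L by (simp add: algebra_simps)
  then have A0null: "A0 \<in> null_sets \<Lambda>" using A0L L by (simp add: null_sets_def)
  have hb: "AE x in \<Lambda>. h x \<le> ennreal (D + 1)"
    by (rule AE_I'[OF A0null]) (auto simp: A0_def not_le)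
  show "\<pi> \<in> P_inf \<Lambda>"
    unfolding P_inf_def
  proof (intro CollectI conjI bexI[of _ "\<lambda>x. enn2real (h x)"] exI[of _ "D + 1"])
    show "prob_space \<pi>" by (rule pis)
    show "sets \<pi> = sets \<Lambda>" using spi sL by simp
    show "(\<lambda>x. enn2real (h x)) \<in> borel_measurable \<Lambda>" using hm by measurable
    have "density \<Lambda> h = density \<Lambda> (\<lambda>x. ennreal (enn2real (h x)))"
    proof (intro density_cong)
      show "AE x in \<Lambda>. h x = ennreal (enn2real (h x))"
        using hb
      proof eventually_elim
        case (elim x)
        then have "h x < \<top>" using le_less_trans[OF elim ennreal_less_top] by blast
        then show ?case by simp
      qed
    qed (use hm in auto)
    then show "\<pi> = density \<Lambda> (\<lambda>x. ennreal (enn2real (h x)))" using hpi by simp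
    show "AE x in \<Lambda>. enn2real (h x) \<le> D + 1"
      using hb
    proof eventually_elim
      case (elim x)
      then have "enn2real (h x) \<le> enn2real (ennreal (D + 1))" by (intro enn2real_mono) auto
      moreover have "enn2real (ennreal (D + 1)) = D + 1" using D0 by (intro enn2real_ennreal) simp
      ultimately show ?case by (simp only:)
    qed
  qed
qed

end
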